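(* Let $N\ge2$ and $(x,y)\in\mathbb{C}^N\times\mathbb{C}^{N-1}$. Then $(x,y)\in\mathbb{G}_{1,N}$ if and only if for every $w\in\overline{\mathbb{D}}$ one has $1-wx_1\neq0$ and \[ \left(\frac{y_1-wx_2}{1-wx_1},\dots,\frac{y_{N-1}-wx_N}{1-wx_1}\right)\in\mathbb{G}_{N-1}. \] In particular, if $(x,y)\in\mathbb{G}_{1,N}$ then $(y_1,\dots,y_{N-1})\in\mathbb{G}_{N-1}$ and $|y_1|<N-1$.
   Context: $\mathbb{D}$ is the open unit disc. $P_N(z;x):=\sum_{j=0}^{N-1}(-1)^jx_{j+1}z^j$, $Q_N(z;y):=1+\sum_{j=1}^{N-1}(-1)^jy_jz^j$, and $\mathbb{G}_{1,N}:=\{(x,y)\in\mathbb{C}^N\times\mathbb{C}^{N-1}: \text{the zero set of }(z,w)\mapsto Q_N(z;y)-wP_N(z;x)\text{ does not meet }\overline{\mathbb{D}}^2\}$. The symmetrized polydisc is $\mathbb{G}_m:=\{(s_1,\dots,s_m)\in\mathbb{C}^m: \text{all roots of } z^m+\sum_{j=1}^m(-1)^js_jz^{m-j}\text{ lie in }\mathbb{D}\}$. *)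

theory Defs
  imports "HOL-Analysis.Analysis"
begin

text \<open>Points of C^N are represented as functions nat => complex, only the
 entries with indices 1..N being relevant (x_1,...,x_N).\<close>

definition P_N :: "nat \<Rightarrow> (nat \<Rightarrow> complex) \<Rightarrow> complex \<Rightarrow> complex" where
  "P_N N x z = (\<Sum>j=0..<N. (-1)^j * x (j+1) * z^j)"

definition Q_N :: "nat \<Rightarrow> (nat \<Rightarrow> complex) \<Rightarrow> complex \<Rightarrow> complex" where
  "Q_N N y z = 1 + (\<Sum>j=1..<N. (-1)^j * y j * z^j)"

definition G1N :: "nat \<Rightarrow> (nat \<Rightarrow> complex) \<Rightarrow> (nat \<Rightarrow> complex) \<Rightarrow> bool" where
  "G1N N x y \<longleftrightarrow> (\<forall>z w. cmod z \<le> 1 \<longrightarrow> cmod w \<le> 1 \<longrightarrow> Q_N N y z - w * P_N N x z \<noteq> 0)"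

definition Gsym :: "nat \<Rightarrow> (nat \<Rightarrow> complex) \<Rightarrow> bool" where
  "Gsym m s \<longleftrightarrow> (\<forall>z. z^m + (\<Sum>j=1..m. (-1)^j * s j * z^(m-j)) = 0 \<longrightarrow> z \<in> ball 0 1)"

end

theory Submission
  imports Defs "HOL-Computational_Algebra.Fundamental_Theorem_Algebra"
begin


lemma rev_id:
  fixes s :: "nat \<Rightarrow> complex"
  assumes "z \<noteq> 0"
  shows "z^m + (\<Sum>j=1..m. (-1)^j * s j * z^(m-j)) = z^m * (1 + (\<Sum>j=1..m. (-1)^j * s j * (1/z)^j))"
proof -
  have "z^m * (\<Sum>j=1..m. (-1)^j * s j * (1/z)^j) = (\<Sum>j=1..m. (-1)^j * s j * z^(m-j))"
    unfolding sum_distrib_left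
  proof (rule sum.cong[OF refl])
    fix j assume "j \<in> {1..m}"
    then have "z^m = z^(m-j) * z^j" by (simp add: power_add[symmetric])
    then show "z^m * ((-1)^j * s j * (1/z)^j) = (-1)^j * s j * z^(m-j)"
      using assms by (simp add: power_one_over field_simps)
  qed
  then show ?thesis by (simp add: distrib_left)
qed

lemma Gsym_iff:
  "Gsym m s \<longleftrightarrow> (\<forall>u. cmod u \<le> 1 \<longrightarrow> 1 + (\<Sum>j=1..m. (-1)^j * s j * u^j) \<noteq> 0)"
proof
  assume G: "Gsym m s"
  show "\<forall>u. cmod u \<le> 1 \<longrightarrow> 1 + (\<Sum>j=1..m. (-1)^j * s j * u^j) \<noteq> 0"
  proof (intro allI impI notI)
    fix u assume u: "cmod u \<le> 1" and p: "1 + (\<Sum>j=1..m. (-1)^j * s j * u^j) = 0"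
    have "u \<noteq> 0" using p by (auto simp: power_0_left)
    define z where "z = 1/u"
    have z0: "z \<noteq> 0" using \<open>u\<noteq>0\<close> by (simp add: z_def)
    have "1/z = u" using \<open>u\<noteq>0\<close> by (simp add: z_def)
    then have "z^m + (\<Sum>j=1..m. (-1)^j * s j * z^(m-j)) = 0"
      using rev_id[OF z0, of m s] p by simp
    then have "cmod z < 1" using G unfolding Gsym_def by auto
    moreover have "cmod z \<ge> 1" using u \<open>u\<noteq>0\<close> by (simp add: z_def norm_divide field_simps)
    ultimately show False by simp
  qed
next
  assume H: "\<forall>u. cmod u \<le> 1 \<longrightarrow> 1 + (\<Sum>j=1..m. (-1)^j * s j * u^j) \<noteq> 0"
  show "Gsym m s" unfolding Gsym_def
  proof (intro allI impI)
    fix z assume q: "z^m + (\<Sum>j=1..m. (-1)^j * s j * z^(m-j)) = 0"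
    show "z \<in> ball 0 1"
    proof (cases "z = 0")
      case False
      then have "1 + (\<Sum>j=1..m. (-1)^j * s j * (1/z)^j) = 0" using rev_id[OF False, of m s] q by simp
      then have "cmod (1/z) > 1" using H by force
      then show ?thesis using False by (simp add: norm_divide field_simps)
    qed simp
  qed
qed

lemma key_id:
  assumes "N \<ge> 1" and a: "1 - w * x 1 \<noteq> 0"
  shows "Q_N N y z - w * P_N N x z = (1 - w * x 1) *
     (1 + (\<Sum>j=1..N-1. (-1)^j * ((y j - w * x (j+1)) / (1 - w * x 1)) * z^j))"
proof -
  have P: "P_N N x z = x 1 + (\<Sum>j=1..<N. (-1)^j * x (j+1) * z^j)"
    unfolding P_N_def using assms(1) by (subst sum.atLeast_Suc_lessThan) auto
  have S: "{1..N-1} = {1..<N}" using assms(1) by auto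
  have "(1 - w * x 1) * (\<Sum>j=1..N-1. (-1)^j * ((y j - w * x (j+1)) / (1 - w * x 1)) * z^j)
      = (\<Sum>j=1..<N. (-1)^j * y j * z^j) - w * (\<Sum>j=1..<N. (-1)^j * x (j+1) * z^j)"
    unfolding S sum_distrib_left sum_subtractf[symmetric]
    by (rule sum.cong) (use a in \<open>auto simp: field_simps\<close>)
  then show ?thesis unfolding Q_N_def P by (simp add: algebra_simps)
qed



lemma coeff_prod_lin:
  fixes r :: "nat \<Rightarrow> complex"
  shows "coeff (\<Prod>i<Suc n. [:-r i, 1:]) n = - (\<Sum>i<Suc n. r i) \<and> coeff (\<Prod>i<Suc n. [:-r i, 1:]) (Suc n) = 1"
proof (induction n)
  case 0 then show ?case by simp
next
  case (Suc n)
  let ?P = "\<Prod>i<Suc n. [:-r i, 1:]"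
  have deg: "degree ?P \<le> Suc n" 
  proof (rule order.trans[OF degree_prod_sum_le])
    have "degree [:-r i, 1:] = 1" for i by simp
    then show "sum (degree \<circ> (\<lambda>i. [:- r i, 1:])) {..<Suc n} \<le> Suc n" by (simp add: o_def)
  qed simp
  have "(\<Prod>i<Suc (Suc n). [:-r i, 1:]) = [:-r (Suc n), 1:] * ?P"
    by (simp add: mult.commute)
  also have "\<dots> = smult (-r (Suc n)) ?P + pCons 0 ?P" by simp
  finally have e: "(\<Prod>i<Suc (Suc n). [:-r i, 1:]) = smult (-r (Suc n)) ?P + pCons 0 ?P" .
  have z: "coeff ?P (Suc (Suc n)) = 0" using deg by (intro coeff_eq_0) simp
  show ?case unfolding e using Suc z by simp
qed

lemma y1_bound:
  fixes y :: "nat \<Rightarrow> complex"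
  assumes m: "m \<ge> 1" and G: "Gsym m y"
  shows "cmod (y 1) < real m"
proof -
  define qp where "qp = monom 1 m + (\<Sum>j=1..m. monom ((-1)^j * y j) (m-j))"
  have pq: "poly qp z = z^m + (\<Sum>j=1..m. (-1)^j * y j * z^(m-j))" for z
    by (simp add: qp_def poly_sum poly_monom)
  have ck: "coeff qp k = (if k = m then 1 else if k < m then (-1)^(m-k) * y (m-k) else 0)" for k
  proof -
    have "coeff qp k = (if k = m then 1 else 0) + (\<Sum>j=1..m. if m - j = k then (-1)^j * y j else 0)"
      by (simp add: qp_def coeff_sum coeff_monom)
    also have "(\<Sum>j=1..m. if m - j = k then (-1)^j * y j else 0) = (if k < m then (-1)^(m-k) * y (m-k) else 0)"
    proof (cases "k < m")
      case True
      have "(\<Sum>j=1..m. if m - j = k then (-1)^j * y j else 0) = (\<Sum>j\<in>{1..m}. if j = m - k then (-1)^j * y j else 0)"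
        by (rule sum.cong) (use True in auto)
      also have "\<dots> = (-1)^(m-k) * y (m-k)" using True by (subst sum.delta) auto
      finally show ?thesis using True by simp
    next
      case False
      then show ?thesis by (intro trans[OF sum.neutral]) auto
    qed
    finally show ?thesis by auto
  qed
  have degq: "degree qp = m"
  proof (rule antisym)
    show "degree qp \<le> m" by (rule degree_le) (simp add: ck)
    show "m \<le> degree qp" by (rule le_degree) (simp add: ck)
  qed
  have lc: "lead_coeff qp = 1" using degq ck by simp
  obtain r where r: "smult (lead_coeff qp) (\<Prod>i<degree qp. [:-r i, 1:]) = qp"
    by (rule complex_poly_decompose')
  then have r': "(\<Prod>i<m. [:-r i, 1:]) = qp" using lc degq by simp
  obtain n where n: "m = Suc n" using m by (cases m) auto
  have "coeff qp n = coeff (\<Prod>i<Suc n. [:-r i, 1:]) n" using r' n by (simp only:)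
  then have "coeff qp n = - (\<Sum>i<m. r i)" using coeff_prod_lin[where n=n and r=r] n by (simp only:)
  moreover have "coeff qp n = - y 1" using ck n by simp
  ultimately have ys: "y 1 = (\<Sum>i<m. r i)" by simp
  have rt: "cmod (r i) < 1" if "i < m" for i
  proof -
    have "poly qp (r i) = 0" unfolding r'[symmetric] poly_prod
      by (rule prod_zero) (use that in auto)
    then show ?thesis using G unfolding Gsym_def pq by auto
  qed
  have "cmod (y 1) \<le> (\<Sum>i<m. cmod (r i))" unfolding ys by (rule norm_sum)
  also have "\<dots> < (\<Sum>i<m. 1)" by (rule sum_strict_mono) (use m rt in \<open>auto simp: lessThan_empty_iff\<close>)
  finally show ?thesis by simp
qed


theorem mainTheorem10:
  fixes N :: nat and x y :: "nat \<Rightarrow> complex"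
  assumes "N \<ge> 2"
  shows "(G1N N x y \<longleftrightarrow>
           (\<forall>w. cmod w \<le> 1 \<longrightarrow>
              1 - w * x 1 \<noteq> 0 \<and>
              Gsym (N - 1) (\<lambda>j. (y j - w * x (j+1)) / (1 - w * x 1))))
         \<and> (G1N N x y \<longrightarrow> Gsym (N - 1) y \<and> cmod (y 1) < real (N - 1))"
proof -
  have N1: "N \<ge> 1" using assms by simp
  have z0: "Q_N N y 0 - w * P_N N x 0 = 1 - w * x 1" for w
    using N1 unfolding Q_N_def P_N_def
    by (simp add: power_0_left sum.atLeast_Suc_lessThan)
  have eq: "G1N N x y \<longleftrightarrow>
           (\<forall>w. cmod w \<le> 1 \<longrightarrow>
              1 - w * x 1 \<noteq> 0 \<and>
              Gsym (N - 1) (\<lambda>j. (y j - w * x (j+1)) / (1 - w * x 1)))"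
  proof
    assume G: "G1N N x y"
    show "\<forall>w. cmod w \<le> 1 \<longrightarrow> 1 - w * x 1 \<noteq> 0 \<and>
              Gsym (N - 1) (\<lambda>j. (y j - w * x (j+1)) / (1 - w * x 1))"
    proof (intro allI impI conjI)
      fix w :: complex assume w: "cmod w \<le> 1"
      show a: "1 - w * x 1 \<noteq> 0" using G w z0[of w] unfolding G1N_def by (metis norm_zero zero_le_one)
      show "Gsym (N - 1) (\<lambda>j. (y j - w * x (j+1)) / (1 - w * x 1))"
        unfolding Gsym_iff
      proof (intro allI impI)
        fix u :: complex assume u: "cmod u \<le> 1"
        have "Q_N N y u - w * P_N N x u \<noteq> 0" using G u w unfolding G1N_def by blast
        then show "1 + (\<Sum>j=1..N-1. (-1)^j * ((y j - w * x (j+1)) / (1 - w * x 1)) * u^j) \<noteq> 0"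
          using key_id[where N=N and w=w and x=x and y=y and z=u, OF N1 a] by auto
      qed
    qed
  next
    assume H: "\<forall>w. cmod w \<le> 1 \<longrightarrow> 1 - w * x 1 \<noteq> 0 \<and>
              Gsym (N - 1) (\<lambda>j. (y j - w * x (j+1)) / (1 - w * x 1))"
    show "G1N N x y" unfolding G1N_def
    proof (intro allI impI)
      fix z w :: complex assume z: "cmod z \<le> 1" and w: "cmod w \<le> 1"
      have a: "1 - w * x 1 \<noteq> 0" and g: "Gsym (N - 1) (\<lambda>j. (y j - w * x (j+1)) / (1 - w * x 1))"
        using H w by auto
      have "1 + (\<Sum>j=1..N-1. (-1)^j * ((y j - w * x (j+1)) / (1 - w * x 1)) * z^j) \<noteq> 0"
        using g z unfolding Gsym_iff by auto
      then show "Q_N N y z - w * P_N N x z \<noteq> 0" using key_id[where N=N and w=w and x=x and y=y and z=z, OF N1 a] a by simp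
    qed
  qed
  moreover have "G1N N x y \<longrightarrow> Gsym (N - 1) y \<and> cmod (y 1) < real (N - 1)"
  proof
    assume G: "G1N N x y"
    have "cmod (0::complex) \<le> 1" by simp
    then have "Gsym (N - 1) (\<lambda>j. (y j - 0 * x (j+1)) / (1 - 0 * x 1))" using eq G by blast
    then have g: "Gsym (N - 1) y" by simp
    moreover have "cmod (y 1) < real (N - 1)" using y1_bound[OF _ g] assms by simp
    ultimately show "Gsym (N - 1) y \<and> cmod (y 1) < real (N - 1)" ..
  qed
  ultimately show ?thesis by blast
qed

end
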